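(* Let $n\ge2$ and $\theta\in\mathcal{M}(\mathrm{Cr}_n)$. Then $\theta\in\mathcal{AM}(\mathrm{Cr}_n)$ if and only if for every pair of distinct, non-disjoint maximal chains $C,D$ of $\mathrm{Cr}_n$, the chains $\theta(C)$ and $\theta(D)$ have opposite parities.
   Context: $\mathrm{Cr}_n$ is the poset $\{x_1,\dots,x_n,y_1,\dots,y_n\}$ whose only relations between distinct elements are $x_i<y_i$ ($1\le i\le n$), $x_{i+1}<y_i$ ($1\le i\le n-1$) and $x_1<y_n$; its maximal chains are exactly these $2n$ two-element chains. The chains $x_i<y_i$ are called odd, and $x_{i+1}<y_i$ ($1\le i\le n-1$) and $x_1<y_n$ are called even. For a finite connected poset $X$ and $x<y$, $e_{xy}$ denotes the incidence-algebra basis element and $B=\{e_{xy}:x<y\}$. For a bijection $\theta:B\to B$ and a maximal chain $C:u_1<\dots<u_k$, $\theta$ is increasing on $C$ if there is a maximal chain $D:v_1<\dots<v_k$ with $\theta(e_{u_iu_j})=e_{v_iv_j}$ for all $i<j$, decreasing if $\theta(e_{u_iu_j})=e_{v_{k-j+1}v_{k-i+1}}$ for all $i<j$; in either case $\theta(C)=D$. $\mathcal{M}(X)$ is the set of bijections $B\to B$ increasing or decreasing on every maximal chain. A walk is a sequence $u_0,\dots,u_m$ where for each $i$ one of $u_i,u_{i+1}$ covers the other; closed if $u_0=u_m$. For a closed walk $\Gamma:u_0,\dots,u_m=u_0$ and $z\in X$: $s^+_{\theta,\Gamma}(z)=|\{i: u_i<u_{i+1},\ \exists w>z,\ \theta(e_{zw})=e_{u_iu_{i+1}}\}|$,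 $s^-_{\theta,\Gamma}(z)=|\{i: u_i>u_{i+1},\ \exists w>z,\ \theta(e_{zw})=e_{u_{i+1}u_i}\}|$, $t^+_{\theta,\Gamma}(z)=|\{i: u_i<u_{i+1},\ \exists w<z,\ \theta(e_{wz})=e_{u_iu_{i+1}}\}|$, $t^-_{\theta,\Gamma}(z)=|\{i: u_i>u_{i+1},\ \exists w<z,\ \theta(e_{wz})=e_{u_{i+1}u_i}\}|$, $0\le i\le m-1$. $\theta$ is admissible if $s^+-s^-=t^+-t^-$ at every $z$ for every closed walk; $\mathcal{AM}(X)$ is the set of admissible elements of $\mathcal{M}(X)$. *)

theory Defs
  imports Main
begin

text \<open>The incidence-algebra basis element e_xy is represented by the pair (x,y);
  B = {(x,y). x < y}.\<close>

definition basis :: "'a set \<Rightarrow> ('a \<Rightarrow> 'a \<Rightarrow> bool) \<Rightarrow> ('a \<times> 'a) set" where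
  "basis S lt = {(x, y). x \<in> S \<and> y \<in> S \<and> lt x y}"

text \<open>A maximal chain u_1 < ... < u_k is represented by the strictly increasing list
  of its elements.\<close>

definition is_chain_list :: "'a set \<Rightarrow> ('a \<Rightarrow> 'a \<Rightarrow> bool) \<Rightarrow> 'a list \<Rightarrow> bool" where
  "is_chain_list S lt us \<longleftrightarrow> set us \<subseteq> S \<and> sorted_wrt lt us"

definition max_chain :: "'a set \<Rightarrow> ('a \<Rightarrow> 'a \<Rightarrow> bool) \<Rightarrow> 'a list \<Rightarrow> bool" where
  "max_chain S lt us \<longleftrightarrow> us \<noteq> [] \<and> is_chain_list S lt us \<and>
     (\<forall>ws. is_chain_list S lt ws \<and> set us \<subseteq> set ws \<longrightarrow> set ws = set us)"

definition increasing_on ::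
  "'a set \<Rightarrow> ('a \<Rightarrow> 'a \<Rightarrow> bool) \<Rightarrow> ('a \<times> 'a \<Rightarrow> 'a \<times> 'a) \<Rightarrow> 'a list \<Rightarrow> 'a list \<Rightarrow> bool" where
  "increasing_on S lt \<theta> us vs \<longleftrightarrow> max_chain S lt vs \<and> length vs = length us \<and>
     (\<forall>i j. i < j \<and> j < length us \<longrightarrow> \<theta> (us ! i, us ! j) = (vs ! i, vs ! j))"

definition decreasing_on ::
  "'a set \<Rightarrow> ('a \<Rightarrow> 'a \<Rightarrow> bool) \<Rightarrow> ('a \<times> 'a \<Rightarrow> 'a \<times> 'a) \<Rightarrow> 'a list \<Rightarrow> 'a list \<Rightarrow> bool" where
  "decreasing_on S lt \<theta> us vs \<longleftrightarrow> max_chain S lt vs \<and> length vs = length us \<and>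
     (\<forall>i j. i < j \<and> j < length us \<longrightarrow>
        \<theta> (us ! i, us ! j) = (vs ! (length us - 1 - j), vs ! (length us - 1 - i)))"

definition chain_image ::
  "'a set \<Rightarrow> ('a \<Rightarrow> 'a \<Rightarrow> bool) \<Rightarrow> ('a \<times> 'a \<Rightarrow> 'a \<times> 'a) \<Rightarrow> 'a list \<Rightarrow> 'a list \<Rightarrow> bool" where
  "chain_image S lt \<theta> C D \<longleftrightarrow> increasing_on S lt \<theta> C D \<or> decreasing_on S lt \<theta> C D"

definition M_set :: "'a set \<Rightarrow> ('a \<Rightarrow> 'a \<Rightarrow> bool) \<Rightarrow> ('a \<times> 'a \<Rightarrow> 'a \<times> 'a) set" where
  "M_set S lt = {\<theta>. bij_betw \<theta> (basis S lt) (basis S lt) \<and>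
      (\<forall>C. max_chain S lt C \<longrightarrow> (\<exists>D. chain_image S lt \<theta> C D))}"

definition covers :: "'a set \<Rightarrow> ('a \<Rightarrow> 'a \<Rightarrow> bool) \<Rightarrow> 'a \<Rightarrow> 'a \<Rightarrow> bool" where
  "covers S lt x y \<longleftrightarrow> x \<in> S \<and> y \<in> S \<and> lt x y \<and> \<not> (\<exists>z\<in>S. lt x z \<and> lt z y)"

definition closed_walk :: "'a set \<Rightarrow> ('a \<Rightarrow> 'a \<Rightarrow> bool) \<Rightarrow> 'a list \<Rightarrow> bool" where
  "closed_walk S lt us \<longleftrightarrow> us \<noteq> [] \<and> set us \<subseteq> S \<and> hd us = last us \<and>
     (\<forall>i. Suc i < length us \<longrightarrow>
        covers S lt (us ! i) (us ! Suc i) \<or> covers S lt (us ! Suc i) (us ! i))"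

definition s_plus where
  "s_plus S lt \<theta> us z = card {i. Suc i < length us \<and> lt (us ! i) (us ! Suc i) \<and>
      (\<exists>w\<in>S. lt z w \<and> \<theta> (z, w) = (us ! i, us ! Suc i))}"

definition s_minus where
  "s_minus S lt \<theta> us z = card {i. Suc i < length us \<and> lt (us ! Suc i) (us ! i) \<and>
      (\<exists>w\<in>S. lt z w \<and> \<theta> (z, w) = (us ! Suc i, us ! i))}"

definition t_plus where
  "t_plus S lt \<theta> us z = card {i. Suc i < length us \<and> lt (us ! i) (us ! Suc i) \<and>
      (\<exists>w\<in>S. lt w z \<and> \<theta> (w, z) = (us ! i, us ! Suc i))}"

definition t_minus where
  "t_minus S lt \<theta> us z = card {i. Suc i < length us \<and> lt (us ! Suc i) (us ! i) \<and>
      (\<exists>w\<in>S. lt w z \<and> \<theta> (w, z) = (us ! Suc i, us ! i))}"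

definition admissible ::
  "'a set \<Rightarrow> ('a \<Rightarrow> 'a \<Rightarrow> bool) \<Rightarrow> ('a \<times> 'a \<Rightarrow> 'a \<times> 'a) \<Rightarrow> bool" where
  "admissible S lt \<theta> \<longleftrightarrow> (\<forall>us. closed_walk S lt us \<longrightarrow> (\<forall>z\<in>S.
      int (s_plus S lt \<theta> us z) - int (s_minus S lt \<theta> us z) =
      int (t_plus S lt \<theta> us z) - int (t_minus S lt \<theta> us z)))"

definition AM_set :: "'a set \<Rightarrow> ('a \<Rightarrow> 'a \<Rightarrow> bool) \<Rightarrow> ('a \<times> 'a \<Rightarrow> 'a \<times> 'a) set" where
  "AM_set S lt = {\<theta> \<in> M_set S lt. admissible S lt \<theta>}"

datatype cr = X nat | Y nat

definition cr_set :: "nat \<Rightarrow> cr set" where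
  "cr_set n = X ` {1..n} \<union> Y ` {1..n}"

definition cr_less :: "nat \<Rightarrow> cr \<Rightarrow> cr \<Rightarrow> bool" where
  "cr_less n a b \<longleftrightarrow> (\<exists>i j. a = X i \<and> b = Y j \<and> i \<in> {1..n} \<and> j \<in> {1..n} \<and>
      (i = j \<or> i = j + 1 \<or> (i = 1 \<and> j = n)))"

definition cr_odd :: "nat \<Rightarrow> cr list \<Rightarrow> bool" where
  "cr_odd n C \<longleftrightarrow> (\<exists>i\<in>{1..n}. C = [X i, Y i])"

definition cr_even :: "nat \<Rightarrow> cr list \<Rightarrow> bool" where
  "cr_even n C \<longleftrightarrow> (\<exists>i\<in>{1..n-1}. C = [X (i + 1), Y i]) \<or> C = [X 1, Y n]"

end

theory Submission
  imports Defs
begin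

definition pr :: "nat \<Rightarrow> nat \<Rightarrow> nat" where "pr n i = (if i = 1 then n else i - 1)"
definition sc :: "nat \<Rightarrow> nat \<Rightarrow> nat" where "sc n j = (if j = n then 1 else j + 1)"

lemma cr_less_XY: "cr_less n a b \<Longrightarrow> \<exists>i j. a = X i \<and> b = Y j"
  unfolding cr_less_def by auto

lemma cr_less_XY_iff: "cr_less n (X i) (Y j) \<longleftrightarrow> i \<in> {1..n} \<and> j \<in> {1..n} \<and> (i = j \<or> i = j + 1 \<or> (i = 1 \<and> j = n))"
  unfolding cr_less_def by auto

lemma cr_less_simps[simp]: "\<not> cr_less n (Y j) b" "\<not> cr_less n a (X i)"
  unfolding cr_less_def by auto

lemma up_X: "n \<ge> 2 \<Longrightarrow> i \<in> {1..n} \<Longrightarrow> cr_less n (X i) (Y j) \<longleftrightarrow> (j = i \<or> j = pr n i)"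
  unfolding cr_less_XY_iff pr_def by auto

lemma lo_Y: "n \<ge> 2 \<Longrightarrow> j \<in> {1..n} \<Longrightarrow> cr_less n (X i) (Y j) \<longleftrightarrow> (i = j \<or> i = sc n j)"
  unfolding cr_less_XY_iff sc_def by auto

lemma pr_ne: "n \<ge> 2 \<Longrightarrow> i \<in> {1..n} \<Longrightarrow> pr n i \<noteq> i" unfolding pr_def by auto
lemma sc_ne: "n \<ge> 2 \<Longrightarrow> i \<in> {1..n} \<Longrightarrow> sc n i \<noteq> i" unfolding sc_def by auto

lemma cr_less_mem: "cr_less n a b \<Longrightarrow> a \<in> cr_set n \<and> b \<in> cr_set n"
  unfolding cr_less_def cr_set_def by auto

lemma covers_iff: "covers (cr_set n) (cr_less n) a b \<longleftrightarrow> cr_less n a b"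
  unfolding covers_def using cr_less_mem cr_less_XY by fastforce

lemma sorted_len: "sorted_wrt (cr_less n) ws \<Longrightarrow> length ws \<le> 2"
proof (cases ws)
  case (Cons a r)
  assume s: "sorted_wrt (cr_less n) ws"
  show ?thesis
  proof (cases r)
    case (Cons b r2)
    then show ?thesis using s \<open>ws = a # r\<close>
      by (cases r2) (auto dest: cr_less_XY)
  qed (use Cons in auto)
qed auto

lemma max_chain_iff: "max_chain (cr_set n) (cr_less n) C \<longleftrightarrow> (\<exists>i j. C = [X i, Y j] \<and> cr_less n (X i) (Y j))"
proof
  assume m: "max_chain (cr_set n) (cr_less n) C"
  hence ne: "C \<noteq> []" and cl: "is_chain_list (cr_set n) (cr_less n) C"
    and mx: "\<And>ws. is_chain_list (cr_set n) (cr_less n) ws \<Longrightarrow> set C \<subseteq> set ws \<Longrightarrow> set ws = set C"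
    unfolding max_chain_def by auto
  from cl have s: "sorted_wrt (cr_less n) C" and sub: "set C \<subseteq> cr_set n" unfolding is_chain_list_def by auto
  obtain a r where C: "C = a # r" using ne by (cases C) auto
  show "\<exists>i j. C = [X i, Y j] \<and> cr_less n (X i) (Y j)"
  proof (cases r)
    case Nil
    have "a \<in> cr_set n" using sub C by auto
    then obtain k where k: "k \<in> {1..n}" "a = X k \<or> a = Y k" unfolding cr_set_def by auto
    have lk: "cr_less n (X k) (Y k)" using k unfolding cr_less_def by auto
    have "is_chain_list (cr_set n) (cr_less n) [X k, Y k]"
      unfolding is_chain_list_def using lk cr_less_mem by auto
    moreover have "set C \<subseteq> set [X k, Y k]" using C Nil k by auto
    ultimately have "set [X k, Y k] = set C" using mx by blast
    then show ?thesis using C Nil by auto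
  next
    case (Cons b r2)
    have l: "cr_less n a b" using s C Cons by auto
    have "length C \<le> 2" using sorted_len s by blast
    then have "r2 = []" using C Cons by auto
    then show ?thesis using l C Cons cr_less_XY by blast
  qed
next
  assume "\<exists>i j. C = [X i, Y j] \<and> cr_less n (X i) (Y j)"
  then obtain i j where C: "C = [X i, Y j]" and l: "cr_less n (X i) (Y j)" by blast
  have "set ws = set C" if w: "is_chain_list (cr_set n) (cr_less n) ws" "set C \<subseteq> set ws" for ws
  proof -
    have "length ws \<le> 2" using w sorted_len unfolding is_chain_list_def by blast
    hence "card (set ws) \<le> 2" using card_length order_trans by blast
    moreover have "card (set C) = 2" using C by simp
    ultimately show ?thesis using w(2) by (metis card_seteq finite_set)
  qed
  then show "max_chain (cr_set n) (cr_less n) C"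
    unfolding max_chain_def is_chain_list_def using C l cr_less_mem by auto
qed

lemma chain_image_eq: assumes "chain_image S lt \<theta> [a, b] D" "length D = 2"
  shows "D = [fst (\<theta> (a, b)), snd (\<theta> (a, b))]"
proof -
  obtain c d where D: "D = [c, d]" using assms(2)
    by (metis One_nat_def Suc_1 length_0_conv length_Suc_conv)
  have "\<theta> ([a,b] ! 0, [a,b] ! 1) = (D ! 0, D ! 1)"
    using assms(1) unfolding chain_image_def increasing_on_def decreasing_on_def
    by (auto simp: D)
  then show ?thesis using D by simp
qed

lemma card_ind: "card {i. i < (m::nat) \<and> P i} = (\<Sum>i<m. if P i then 1 else 0)"
proof -
  have "{i. i < m \<and> P i} = {i \<in> {..<m}. P i}" by auto
  then show ?thesis by (simp add: sum.inter_filter[symmetric])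
qed

lemma conservation:
  assumes "us \<noteq> []" "hd us = last us"
  shows "card {i. Suc i < length us \<and> us ! i = v} = card {i. Suc i < length us \<and> us ! Suc i = v}"
proof -
  obtain m where L: "length us = Suc m" using assms(1) by (cases us) auto
  define f where "f i = (if us ! i = v then 1 else 0::nat)" for i
  have e: "f 0 = f m" using assms L unfolding f_def
    by (metis diff_Suc_1 hd_conv_nth last_conv_nth)
  have "(\<Sum>i<Suc m. f i) = f 0 + (\<Sum>i<m. f (Suc i))" by (rule sum.lessThan_Suc_shift)
  moreover have "(\<Sum>i<Suc m. f i) = (\<Sum>i<m. f i) + f m" by simp
  ultimately have "(\<Sum>i<m. f i) = (\<Sum>i<m. f (Suc i))" using e by simp
  moreover have "{i. Suc i < length us \<and> us ! i = v} = {i. i < m \<and> us ! i = v}" using L by auto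
  moreover have "{i. Suc i < length us \<and> us ! Suc i = v} = {i. i < m \<and> us ! Suc i = v}" using L by auto
  ultimately show ?thesis by (simp add: card_ind f_def)
qed

lemma card_split:
  assumes "\<And>i. Suc i < L \<Longrightarrow> P i \<longleftrightarrow> Q i \<or> R i" "\<And>i. Suc i < L \<Longrightarrow> \<not> (Q i \<and> R i)"
  shows "card {i. Suc i < L \<and> P i} = card {i. Suc i < L \<and> Q i} + card {i. Suc i < L \<and> R i}"
proof -
  have "{i. Suc i < L \<and> P i} = {i. Suc i < L \<and> Q i} \<union> {i. Suc i < L \<and> R i}" using assms(1) by auto
  moreover have "finite {i. Suc i < L \<and> Q i}" "finite {i. Suc i < L \<and> R i}" by (auto intro: finite_subset[of _ "{..<L}"])
  moreover have "{i. Suc i < L \<and> Q i} \<inter> {i. Suc i < L \<and> R i} = {}" using assms(2) by auto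
  ultimately show ?thesis by (simp add: card_Un_disjoint)
qed

definition E :: "cr list \<Rightarrow> cr \<Rightarrow> cr \<Rightarrow> int" where
  "E us a b = int (card {i. Suc i < length us \<and> us ! i = a \<and> us ! Suc i = b})"

definition G :: "cr list \<Rightarrow> cr \<times> cr \<Rightarrow> int" where
  "G us p = E us (fst p) (snd p) - E us (snd p) (fst p)"

lemma walk_step: "closed_walk (cr_set n) (cr_less n) us \<Longrightarrow> Suc i < length us \<Longrightarrow>
   cr_less n (us ! i) (us ! Suc i) \<or> cr_less n (us ! Suc i) (us ! i)"
  unfolding closed_walk_def covers_iff by blast

lemma nbX: assumes n: "n \<ge> 2" and k: "k \<in> {1..n}" and s: "cr_less n a b \<or> cr_less n b a" and a: "a = X k"
  shows "b = Y k \<or> b = Y (pr n k)"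
proof -
  have "cr_less n (X k) b" using s a by auto
  then obtain j where "b = Y j" "cr_less n (X k) (Y j)" using cr_less_XY by blast
  then show ?thesis using up_X[OF n k] by auto
qed

lemma nbY: assumes n: "n \<ge> 2" and k: "k \<in> {1..n}" and s: "cr_less n a b \<or> cr_less n b a" and a: "a = Y k"
  shows "b = X k \<or> b = X (sc n k)"
proof -
  have "cr_less n b (Y k)" using s a by auto
  then obtain j where "b = X j" "cr_less n (X j) (Y k)" using cr_less_XY by blast
  then show ?thesis using lo_Y[OF n k] by auto
qed

lemma cons_X:
  assumes n: "n \<ge> 2" and w: "closed_walk (cr_set n) (cr_less n) us" and k: "k \<in> {1..n}"
  shows "G us (X k, Y k) + G us (X k, Y (pr n k)) = 0"
proof -
  let ?L = "length us"
  have c: "card {i. Suc i < ?L \<and> us ! i = X k} = card {i. Suc i < ?L \<and> us ! Suc i = X k}"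
    using w unfolding closed_walk_def by (intro conservation) auto
  have ne: "pr n k \<noteq> k" using pr_ne n k by blast
  have a: "card {i. Suc i < ?L \<and> us ! i = X k} =
     card {i. Suc i < ?L \<and> us ! i = X k \<and> us ! Suc i = Y k} + card {i. Suc i < ?L \<and> us ! i = X k \<and> us ! Suc i = Y (pr n k)}"
  proof (rule card_split)
    fix i assume i: "Suc i < ?L"
    show "us ! i = X k \<longleftrightarrow> us ! i = X k \<and> us ! Suc i = Y k \<or> us ! i = X k \<and> us ! Suc i = Y (pr n k)"
      using nbX[OF n k walk_step[OF w i]] nbX[OF n k walk_step[OF w i, THEN disj_commute[THEN iffD1]]] by auto
    show "\<not> ((us ! i = X k \<and> us ! Suc i = Y k) \<and> us ! i = X k \<and> us ! Suc i = Y (pr n k))" using ne by auto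
  qed
  have b: "card {i. Suc i < ?L \<and> us ! Suc i = X k} =
     card {i. Suc i < ?L \<and> us ! i = Y k \<and> us ! Suc i = X k} + card {i. Suc i < ?L \<and> us ! i = Y (pr n k) \<and> us ! Suc i = X k}"
  proof (rule card_split)
    fix i assume i: "Suc i < ?L"
    show "us ! Suc i = X k \<longleftrightarrow> us ! i = Y k \<and> us ! Suc i = X k \<or> us ! i = Y (pr n k) \<and> us ! Suc i = X k"
      using nbX[OF n k walk_step[OF w i]] nbX[OF n k walk_step[OF w i, THEN disj_commute[THEN iffD1]]] by auto
    show "\<not> ((us ! i = Y k \<and> us ! Suc i = X k) \<and> us ! i = Y (pr n k) \<and> us ! Suc i = X k)" using ne by auto
  qed
  show ?thesis using a b c unfolding G_def E_def by simp
qed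

lemma cons_Y:
  assumes n: "n \<ge> 2" and w: "closed_walk (cr_set n) (cr_less n) us" and k: "k \<in> {1..n}"
  shows "G us (X k, Y k) + G us (X (sc n k), Y k) = 0"
proof -
  let ?L = "length us"
  have c: "card {i. Suc i < ?L \<and> us ! i = Y k} = card {i. Suc i < ?L \<and> us ! Suc i = Y k}"
    using w unfolding closed_walk_def by (intro conservation) auto
  have ne: "sc n k \<noteq> k" using sc_ne n k by blast
  have a: "card {i. Suc i < ?L \<and> us ! i = Y k} =
     card {i. Suc i < ?L \<and> us ! i = Y k \<and> us ! Suc i = X k} + card {i. Suc i < ?L \<and> us ! i = Y k \<and> us ! Suc i = X (sc n k)}"
  proof (rule card_split)
    fix i assume i: "Suc i < ?L"
    show "us ! i = Y k \<longleftrightarrow> us ! i = Y k \<and> us ! Suc i = X k \<or> us ! i = Y k \<and> us ! Suc i = X (sc n k)"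
      using nbY[OF n k walk_step[OF w i]] nbY[OF n k walk_step[OF w i, THEN disj_commute[THEN iffD1]]] by auto
    show "\<not> ((us ! i = Y k \<and> us ! Suc i = X k) \<and> us ! i = Y k \<and> us ! Suc i = X (sc n k))" using ne by auto
  qed
  have b: "card {i. Suc i < ?L \<and> us ! Suc i = Y k} =
     card {i. Suc i < ?L \<and> us ! i = X k \<and> us ! Suc i = Y k} + card {i. Suc i < ?L \<and> us ! i = X (sc n k) \<and> us ! Suc i = Y k}"
  proof (rule card_split)
    fix i assume i: "Suc i < ?L"
    show "us ! Suc i = Y k \<longleftrightarrow> us ! i = X k \<and> us ! Suc i = Y k \<or> us ! i = X (sc n k) \<and> us ! Suc i = Y k"
      using nbY[OF n k walk_step[OF w i]] nbY[OF n k walk_step[OF w i, THEN disj_commute[THEN iffD1]]] by auto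
    show "\<not> ((us ! i = X k \<and> us ! Suc i = Y k) \<and> us ! i = X (sc n k) \<and> us ! Suc i = Y k)" using ne by auto
  qed
  show ?thesis using a b c unfolding G_def E_def by simp
qed

lemma walk_G:
  assumes n: "n \<ge> 2" and w: "closed_walk (cr_set n) (cr_less n) us" and l: "cr_less n (X a) (Y b)"
  shows "G us (X a, Y b) = (if a = b then G us (X 1, Y 1) else - G us (X 1, Y 1))"
proof -
  define g where "g = G us (X 1, Y 1)"
  have odd: "Suc i \<le> n \<longrightarrow> G us (X (Suc i), Y (Suc i)) = g" for i
  proof (induction i)
    case 0 then show ?case by (simp add: g_def)
  next
    case (Suc i)
    show ?case
    proof
      assume i: "Suc (Suc i) \<le> n"
      have k1: "Suc i \<in> {1..n}" "Suc (Suc i) \<in> {1..n}" using i by auto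
      have "sc n (Suc i) = Suc (Suc i)" using i unfolding sc_def by auto
      then have A: "G us (X (Suc i), Y (Suc i)) + G us (X (Suc (Suc i)), Y (Suc i)) = 0"
        using cons_Y[OF n w k1(1)] by simp
      have "pr n (Suc (Suc i)) = Suc i" unfolding pr_def by auto
      then have B: "G us (X (Suc (Suc i)), Y (Suc (Suc i))) + G us (X (Suc (Suc i)), Y (Suc i)) = 0"
        using cons_X[OF n w k1(2)] by simp
      show "G us (X (Suc (Suc i)), Y (Suc (Suc i))) = g" using A B Suc i by simp
    qed
  qed
  have oddb: "b \<in> {1..n} \<Longrightarrow> G us (X b, Y b) = g" for b
    using odd[of "b - 1"] by (cases b) auto
  have ab: "a \<in> {1..n}" "b \<in> {1..n}" and cs: "a = b \<or> a = b + 1 \<or> (a = 1 \<and> b = n)"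
    using l unfolding cr_less_XY_iff by auto
  show ?thesis
  proof (cases "a = b")
    case True then show ?thesis using oddb[OF ab(2)] unfolding g_def by simp
  next
    case False
    show ?thesis
    proof (cases "a = b + 1")
      case True
      then have "sc n b = a" using ab unfolding sc_def by auto
      then have "G us (X b, Y b) + G us (X a, Y b) = 0" using cons_Y[OF n w ab(2)] by simp
      then show ?thesis using oddb[OF ab(2)] False by (simp add: g_def)
    next
      case F2: False
      then have "a = 1" "b = n" using cs False by auto
      then have "pr n a = b" unfolding pr_def by auto
      then have "G us (X a, Y a) + G us (X a, Y b) = 0" using cons_X[OF n w ab(1)] by simp
      then show ?thesis using oddb[OF ab(1)] False \<open>a = 1\<close> by (simp add: g_def)
    qed
  qed
qed

lemma basis_cr: "(a, b) \<in> basis (cr_set n) (cr_less n) \<longleftrightarrow> cr_less n a b"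
  unfolding basis_def using cr_less_mem by auto

lemma theta_basis: "\<theta> \<in> M_set S lt \<Longrightarrow> p \<in> basis S lt \<Longrightarrow> \<theta> p \<in> basis S lt"
  unfolding M_set_def bij_betw_def by auto

lemma theta_inj: "\<theta> \<in> M_set S lt \<Longrightarrow> p \<in> basis S lt \<Longrightarrow> q \<in> basis S lt \<Longrightarrow> \<theta> p = \<theta> q \<Longrightarrow> p = q"
  unfolding M_set_def bij_betw_def inj_on_def by auto

lemma theta_less: "\<theta> \<in> M_set (cr_set n) (cr_less n) \<Longrightarrow> cr_less n a b \<Longrightarrow> cr_less n (fst (\<theta> (a, b))) (snd (\<theta> (a, b)))"
  using theta_basis[of \<theta> "cr_set n" "cr_less n" "(a,b)"] basis_cr
  by (metis prod.collapse)

lemma X_upper: "n \<ge> 2 \<Longrightarrow> cr_less n (X k) (Y j) \<Longrightarrow> cr_less n (X k) (Y j') \<Longrightarrow> j \<noteq> j' \<Longrightarrow>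
   cr_less n (X k) (Y m) \<Longrightarrow> m = j \<or> m = j'"
  using up_X[of n k] unfolding cr_less_XY_iff by (metis atLeastAtMost_iff)

lemma Y_lower: "n \<ge> 2 \<Longrightarrow> cr_less n (X i) (Y k) \<Longrightarrow> cr_less n (X i') (Y k) \<Longrightarrow> i \<noteq> i' \<Longrightarrow>
   cr_less n (X m) (Y k) \<Longrightarrow> m = i \<or> m = i'"
  using lo_Y[of n k] unfolding cr_less_XY_iff by (metis atLeastAtMost_iff)

lemma adm_X:
  assumes n: "n \<ge> 2" and th: "\<theta> \<in> M_set (cr_set n) (cr_less n)"
    and l1: "cr_less n (X k) (Y j)" and l2: "cr_less n (X k) (Y j')" and ne: "j \<noteq> j'"
  shows "int (s_plus (cr_set n) (cr_less n) \<theta> us (X k)) - int (s_minus (cr_set n) (cr_less n) \<theta> us (X k))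
     = G us (\<theta> (X k, Y j)) + G us (\<theta> (X k, Y j'))"
    and "t_plus (cr_set n) (cr_less n) \<theta> us (X k) = 0" "t_minus (cr_set n) (cr_less n) \<theta> us (X k) = 0"
proof -
  let ?L = "length us"
  define p where "p = \<theta> (X k, Y j)"
  define q where "q = \<theta> (X k, Y j')"
  have pl: "cr_less n (fst p) (snd p)" "cr_less n (fst q) (snd q)" unfolding p_def q_def using theta_less[OF th] l1 l2 by auto
  have pq: "p \<noteq> q" unfolding p_def q_def using theta_inj[OF th] l1 l2 ne basis_cr by blast
  have ex: "(\<exists>w\<in>cr_set n. cr_less n (X k) w \<and> \<theta> (X k, w) = r) \<longleftrightarrow> r = p \<or> r = q" for r
  proof
    assume "\<exists>w\<in>cr_set n. cr_less n (X k) w \<and> \<theta> (X k, w) = r"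
    then obtain w where "cr_less n (X k) w" "\<theta> (X k, w) = r" by blast
    moreover then obtain m where "w = Y m" using cr_less_XY by blast
    ultimately show "r = p \<or> r = q" using X_upper[OF n l1 l2 ne] unfolding p_def q_def by blast
  next
    assume "r = p \<or> r = q"
    then show "\<exists>w\<in>cr_set n. cr_less n (X k) w \<and> \<theta> (X k, w) = r"
      unfolding p_def q_def using l1 l2 cr_less_mem by blast
  qed
  have "s_plus (cr_set n) (cr_less n) \<theta> us (X k) =
     card {i. Suc i < ?L \<and> us ! i = fst p \<and> us ! Suc i = snd p} + card {i. Suc i < ?L \<and> us ! i = fst q \<and> us ! Suc i = snd q}"
    unfolding s_plus_def
  proof (rule card_split)
    fix i assume "Suc i < ?L"
    show "(cr_less n (us ! i) (us ! Suc i) \<and> (\<exists>w\<in>cr_set n. cr_less n (X k) w \<and> \<theta> (X k, w) = (us ! i, us ! Suc i))) \<longleftrightarrow>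
      (us ! i = fst p \<and> us ! Suc i = snd p) \<or> (us ! i = fst q \<and> us ! Suc i = snd q)"
      unfolding ex using pl by (metis fst_conv prod.collapse snd_conv)
    show "\<not> ((us ! i = fst p \<and> us ! Suc i = snd p) \<and> us ! i = fst q \<and> us ! Suc i = snd q)"
      using pq by (metis prod.collapse)
  qed
  moreover have "s_minus (cr_set n) (cr_less n) \<theta> us (X k) =
     card {i. Suc i < ?L \<and> us ! i = snd p \<and> us ! Suc i = fst p} + card {i. Suc i < ?L \<and> us ! i = snd q \<and> us ! Suc i = fst q}"
    unfolding s_minus_def
  proof (rule card_split)
    fix i assume "Suc i < ?L"
    show "(cr_less n (us ! Suc i) (us ! i) \<and> (\<exists>w\<in>cr_set n. cr_less n (X k) w \<and> \<theta> (X k, w) = (us ! Suc i, us ! i))) \<longleftrightarrow>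
      (us ! i = snd p \<and> us ! Suc i = fst p) \<or> (us ! i = snd q \<and> us ! Suc i = fst q)"
      unfolding ex using pl by (metis fst_conv prod.collapse snd_conv)
    show "\<not> ((us ! i = snd p \<and> us ! Suc i = fst p) \<and> us ! i = snd q \<and> us ! Suc i = fst q)"
      using pq by (metis prod.collapse)
  qed
  ultimately show "int (s_plus (cr_set n) (cr_less n) \<theta> us (X k)) - int (s_minus (cr_set n) (cr_less n) \<theta> us (X k))
     = G us (\<theta> (X k, Y j)) + G us (\<theta> (X k, Y j'))"
    unfolding G_def E_def p_def[symmetric] q_def[symmetric] by simp
  show "t_plus (cr_set n) (cr_less n) \<theta> us (X k) = 0" "t_minus (cr_set n) (cr_less n) \<theta> us (X k) = 0"
    unfolding t_plus_def t_minus_def by auto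
qed

lemma adm_Y:
  assumes n: "n \<ge> 2" and th: "\<theta> \<in> M_set (cr_set n) (cr_less n)"
    and l1: "cr_less n (X j) (Y k)" and l2: "cr_less n (X j') (Y k)" and ne: "j \<noteq> j'"
  shows "int (t_plus (cr_set n) (cr_less n) \<theta> us (Y k)) - int (t_minus (cr_set n) (cr_less n) \<theta> us (Y k))
     = G us (\<theta> (X j, Y k)) + G us (\<theta> (X j', Y k))"
    and "s_plus (cr_set n) (cr_less n) \<theta> us (Y k) = 0" "s_minus (cr_set n) (cr_less n) \<theta> us (Y k) = 0"
proof -
  let ?L = "length us"
  define p where "p = \<theta> (X j, Y k)"
  define q where "q = \<theta> (X j', Y k)"
  have pl: "cr_less n (fst p) (snd p)" "cr_less n (fst q) (snd q)" unfolding p_def q_def using theta_less[OF th] l1 l2 by auto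
  have pq: "p \<noteq> q" unfolding p_def q_def using theta_inj[OF th] l1 l2 ne basis_cr by blast
  have ex: "(\<exists>w\<in>cr_set n. cr_less n w (Y k) \<and> \<theta> (w, Y k) = r) \<longleftrightarrow> r = p \<or> r = q" for r
  proof
    assume "\<exists>w\<in>cr_set n. cr_less n w (Y k) \<and> \<theta> (w, Y k) = r"
    then obtain w where "cr_less n w (Y k)" "\<theta> (w, Y k) = r" by blast
    moreover then obtain m where "w = X m" using cr_less_XY by blast
    ultimately show "r = p \<or> r = q" using Y_lower[OF n l1 l2 ne] unfolding p_def q_def by blast
  next
    assume "r = p \<or> r = q"
    then show "\<exists>w\<in>cr_set n. cr_less n w (Y k) \<and> \<theta> (w, Y k) = r"
      unfolding p_def q_def using l1 l2 cr_less_mem by blast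
  qed
  have "t_plus (cr_set n) (cr_less n) \<theta> us (Y k) =
     card {i. Suc i < ?L \<and> us ! i = fst p \<and> us ! Suc i = snd p} + card {i. Suc i < ?L \<and> us ! i = fst q \<and> us ! Suc i = snd q}"
    unfolding t_plus_def
  proof (rule card_split)
    fix i assume "Suc i < ?L"
    show "(cr_less n (us ! i) (us ! Suc i) \<and> (\<exists>w\<in>cr_set n. cr_less n w (Y k) \<and> \<theta> (w, Y k) = (us ! i, us ! Suc i))) \<longleftrightarrow>
      (us ! i = fst p \<and> us ! Suc i = snd p) \<or> (us ! i = fst q \<and> us ! Suc i = snd q)"
      unfolding ex using pl by (metis fst_conv prod.collapse snd_conv)
    show "\<not> ((us ! i = fst p \<and> us ! Suc i = snd p) \<and> us ! i = fst q \<and> us ! Suc i = snd q)"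
      using pq by (metis prod.collapse)
  qed
  moreover have "t_minus (cr_set n) (cr_less n) \<theta> us (Y k) =
     card {i. Suc i < ?L \<and> us ! i = snd p \<and> us ! Suc i = fst p} + card {i. Suc i < ?L \<and> us ! i = snd q \<and> us ! Suc i = fst q}"
    unfolding t_minus_def
  proof (rule card_split)
    fix i assume "Suc i < ?L"
    show "(cr_less n (us ! Suc i) (us ! i) \<and> (\<exists>w\<in>cr_set n. cr_less n w (Y k) \<and> \<theta> (w, Y k) = (us ! Suc i, us ! i))) \<longleftrightarrow>
      (us ! i = snd p \<and> us ! Suc i = fst p) \<or> (us ! i = snd q \<and> us ! Suc i = fst q)"
      unfolding ex using pl by (metis fst_conv prod.collapse snd_conv)
    show "\<not> ((us ! i = snd p \<and> us ! Suc i = fst p) \<and> us ! i = snd q \<and> us ! Suc i = fst q)"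
      using pq by (metis prod.collapse)
  qed
  ultimately show "int (t_plus (cr_set n) (cr_less n) \<theta> us (Y k)) - int (t_minus (cr_set n) (cr_less n) \<theta> us (Y k))
     = G us (\<theta> (X j, Y k)) + G us (\<theta> (X j', Y k))"
    unfolding G_def E_def p_def[symmetric] q_def[symmetric] by simp
  show "s_plus (cr_set n) (cr_less n) \<theta> us (Y k) = 0" "s_minus (cr_set n) (cr_less n) \<theta> us (Y k) = 0"
    unfolding s_plus_def s_minus_def by auto
qed

definition cyc :: "nat \<Rightarrow> cr list" where
  "cyc n = map (\<lambda>p. if p = 2 * n then X 1 else if even p then X (p div 2 + 1) else Y (p div 2 + 1)) [0..<2 * n + 1]"

lemma cyc_nth: "p \<le> 2 * n \<Longrightarrow> cyc n ! p = (if p = 2 * n then X 1 else if even p then X (p div 2 + 1) else Y (p div 2 + 1))"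
  unfolding cyc_def by (simp del: upt_Suc add: nth_map_upt)

lemma cyc_len: "length (cyc n) = 2 * n + 1" unfolding cyc_def by simp

lemma cyc_walk: assumes n: "n \<ge> 2" shows "closed_walk (cr_set n) (cr_less n) (cyc n)"
proof -
  have ne: "cyc n \<noteq> []" using cyc_len by (metis Suc_eq_plus1 list.size(3) nat.distinct(1))
  have hd: "hd (cyc n) = X 1" using ne cyc_nth[of 0 n] n by (simp add: hd_conv_nth)
  have lst: "last (cyc n) = X 1" using ne cyc_nth[of "2*n" n] by (simp add: last_conv_nth cyc_len)
  have step: "cr_less n (cyc n ! i) (cyc n ! Suc i) \<or> cr_less n (cyc n ! Suc i) (cyc n ! i)"
    if i: "Suc i < length (cyc n)" for i
  proof -
    have i2: "Suc i \<le> 2 * n" using i cyc_len by simp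
    show ?thesis
    proof (cases "even i")
      case True
      then have "Suc i \<noteq> 2 * n" by presburger
      moreover have "Suc i div 2 = i div 2" using True by presburger
      ultimately have "cyc n ! i = X (i div 2 + 1)" "cyc n ! Suc i = Y (i div 2 + 1)"
        using cyc_nth[of i n] cyc_nth[of "Suc i" n] i2 True by auto
      moreover have "i div 2 + 1 \<le> n" using i2 True by presburger
      ultimately show ?thesis by (simp add: cr_less_XY_iff)
    next
      case False
      then have a: "cyc n ! i = Y (i div 2 + 1)" using cyc_nth[of i n] i2 by auto
      show ?thesis
      proof (cases "Suc i = 2 * n")
        case True
        then have "cyc n ! Suc i = X 1" using cyc_nth[of "Suc i" n] by auto
        moreover have "i div 2 + 1 = n" using True False by presburger
        moreover have "cr_less n (X 1) (Y n)" using n unfolding cr_less_XY_iff by auto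
        ultimately show ?thesis using a by simp
      next
        case F2: False
        moreover have "Suc i div 2 = i div 2 + 1" "even (Suc i)" using False by presburger+
        ultimately have "cyc n ! Suc i = X (i div 2 + 2)" using cyc_nth[of "Suc i" n] i2 by simp
        moreover have "i div 2 + 2 \<le> n" using i2 F2 False by presburger
        ultimately show ?thesis using a by (simp add: cr_less_XY_iff)
      qed
    qed
  qed
  have "set (cyc n) \<subseteq> cr_set n"
  proof
    fix x assume "x \<in> set (cyc n)"
    then obtain i where i: "i < length (cyc n)" "x = cyc n ! i" by (auto simp: in_set_conv_nth)
    show "x \<in> cr_set n"
    proof (cases "Suc i < length (cyc n)")
      case True then show ?thesis using step[OF True] cr_less_mem i by blast
    next
      case False
      then have "i = 2 * n" using i cyc_len by simp
      then show ?thesis using i cyc_nth[of i n] n unfolding cr_set_def by auto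
    qed
  qed
  then show ?thesis unfolding closed_walk_def covers_iff using ne hd lst step by auto
qed

lemma cyc_G: assumes n: "n \<ge> 2" shows "G (cyc n) (X 1, Y 1) = 1"
proof -
  have x1: "cyc n ! i = X 1 \<longleftrightarrow> i = 0 \<or> i = 2 * n" if "i \<le> 2 * n" for i
  proof (cases "i = 2 * n \<or> odd i")
    case True
    have "odd i \<Longrightarrow> i \<noteq> 0" by (cases i) auto
    then show ?thesis using True cyc_nth[OF that] n by auto
  next
    case False
    then have "cyc n ! i = X (i div 2 + 1)" using cyc_nth[OF that] by auto
    moreover have "i div 2 = 0 \<longleftrightarrow> i = 0" using False by presburger
    ultimately show ?thesis using False by simp
  qed
  have y1: "cyc n ! i = Y 1 \<longleftrightarrow> i = 1" if "i \<le> 2 * n" for i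
  proof (cases "i = 2 * n \<or> even i")
    case True then show ?thesis using cyc_nth[OF that] n by auto
  next
    case False
    then have "cyc n ! i = Y (i div 2 + 1)" using cyc_nth[OF that] by auto
    moreover have "i div 2 = 0 \<longleftrightarrow> i = 1" using False by presburger
    ultimately show ?thesis by simp
  qed
  have A: "{i. Suc i < length (cyc n) \<and> cyc n ! i = X 1 \<and> cyc n ! Suc i = Y 1} = {0}"
    using x1 y1 n by (auto simp: cyc_len)
  have B: "{i. Suc i < length (cyc n) \<and> cyc n ! i = Y 1 \<and> cyc n ! Suc i = X 1} = {}"
    using x1 y1 n by (auto simp: cyc_len)
  show ?thesis unfolding G_def E_def fst_conv snd_conv A B by simp
qed

lemma parity: "n \<ge> 2 \<Longrightarrow> cr_less n (X a) (Y b) \<Longrightarrow> (cr_odd n [X a, Y b] \<longleftrightarrow> a = b) \<and> (cr_even n [X a, Y b] \<longleftrightarrow> a \<noteq> b)"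
  unfolding cr_odd_def cr_even_def cr_less_XY_iff by auto

lemma image_chain:
  assumes th: "\<theta> \<in> M_set (cr_set n) (cr_less n)" and l: "cr_less n (X i) (Y j)"
    and ci: "chain_image (cr_set n) (cr_less n) \<theta> [X i, Y j] C'"
  shows "\<exists>a b. \<theta> (X i, Y j) = (X a, Y b) \<and> cr_less n (X a) (Y b) \<and> C' = [X a, Y b]"
proof -
  have "max_chain (cr_set n) (cr_less n) C'" using ci unfolding chain_image_def increasing_on_def decreasing_on_def by auto
  then obtain a b where C': "C' = [X a, Y b]" "cr_less n (X a) (Y b)" using max_chain_iff by blast
  then have "C' = [fst (\<theta> (X i, Y j)), snd (\<theta> (X i, Y j))]" using chain_image_eq[OF ci] by simp
  then show ?thesis using C' by (metis list.inject prod.collapse)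
qed

lemma G_pm: "n \<ge> 2 \<Longrightarrow> closed_walk (cr_set n) (cr_less n) us \<Longrightarrow> cr_less n (X a) (Y b) \<Longrightarrow> cr_less n (X a') (Y b') \<Longrightarrow>
   (a = b \<longleftrightarrow> a' \<noteq> b') \<Longrightarrow> G us (X a, Y b) + G us (X a', Y b') = 0"
  using walk_G[of n us a b] walk_G[of n us a' b'] by auto

lemma G_pm2: "n \<ge> 2 \<Longrightarrow> closed_walk (cr_set n) (cr_less n) us \<Longrightarrow> cr_less n (X a) (Y b) \<Longrightarrow> cr_less n (X a') (Y b') \<Longrightarrow>
   G us (X 1, Y 1) = 1 \<Longrightarrow> G us (X a, Y b) + G us (X a', Y b') = 0 \<Longrightarrow> (a = b \<longleftrightarrow> a' \<noteq> b')"
  using walk_G[of n us a b] walk_G[of n us a' b'] by (auto split: if_splits)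

theorem lemma4p9:
  fixes n :: nat and \<theta> :: "cr \<times> cr \<Rightarrow> cr \<times> cr"
  assumes "n \<ge> 2"
    and "\<theta> \<in> M_set (cr_set n) (cr_less n)"
  shows "\<theta> \<in> AM_set (cr_set n) (cr_less n) \<longleftrightarrow>
    (\<forall>C D C' D'. max_chain (cr_set n) (cr_less n) C \<and> max_chain (cr_set n) (cr_less n) D \<and>
        set C \<noteq> set D \<and> set C \<inter> set D \<noteq> {} \<and>
        chain_image (cr_set n) (cr_less n) \<theta> C C' \<and> chain_image (cr_set n) (cr_less n) \<theta> D D' \<longrightarrow>
        (cr_odd n C' \<and> cr_even n D') \<or> (cr_even n C' \<and> cr_odd n D'))"
proof
  note n = assms(1) and th = assms(2)
  assume "\<theta> \<in> AM_set (cr_set n) (cr_less n)"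
  then have adm: "admissible (cr_set n) (cr_less n) \<theta>" unfolding AM_set_def by auto
  define W where "W = cyc n"
  have W: "closed_walk (cr_set n) (cr_less n) W" "G W (X 1, Y 1) = 1" unfolding W_def using cyc_walk cyc_G n by auto
  have eqz: "int (s_plus (cr_set n) (cr_less n) \<theta> W z) - int (s_minus (cr_set n) (cr_less n) \<theta> W z) =
      int (t_plus (cr_set n) (cr_less n) \<theta> W z) - int (t_minus (cr_set n) (cr_less n) \<theta> W z)" if "z \<in> cr_set n" for z
    using adm W(1) that unfolding admissible_def by blast
  show "\<forall>C D C' D'. max_chain (cr_set n) (cr_less n) C \<and> max_chain (cr_set n) (cr_less n) D \<and>
        set C \<noteq> set D \<and> set C \<inter> set D \<noteq> {} \<and>
        chain_image (cr_set n) (cr_less n) \<theta> C C' \<and> chain_image (cr_set n) (cr_less n) \<theta> D D' \<longrightarrow>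
        (cr_odd n C' \<and> cr_even n D') \<or> (cr_even n C' \<and> cr_odd n D')"
  proof (intro allI impI, elim conjE)
    fix C D C' D'
    assume mC: "max_chain (cr_set n) (cr_less n) C" and mD: "max_chain (cr_set n) (cr_less n) D"
      and neq: "set C \<noteq> set D" and int: "set C \<inter> set D \<noteq> {}"
      and cC: "chain_image (cr_set n) (cr_less n) \<theta> C C'" and cD: "chain_image (cr_set n) (cr_less n) \<theta> D D'"
    obtain i j where C: "C = [X i, Y j]" and lC: "cr_less n (X i) (Y j)" using mC max_chain_iff by blast
    obtain i' j' where D: "D = [X i', Y j']" and lD: "cr_less n (X i') (Y j')" using mD max_chain_iff by blast
    obtain a b where p: "\<theta> (X i, Y j) = (X a, Y b)" "cr_less n (X a) (Y b)" "C' = [X a, Y b]"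
      using image_chain[OF th lC] cC C by blast
    obtain a' b' where q: "\<theta> (X i', Y j') = (X a', Y b')" "cr_less n (X a') (Y b')" "D' = [X a', Y b']"
      using image_chain[OF th lD] cD D by blast
    have "G W (X a, Y b) + G W (X a', Y b') = 0"
    proof (cases "i = i'")
      case True
      then have jj: "j \<noteq> j'" using neq C D by auto
      have z: "X i \<in> cr_set n" using lC cr_less_mem by blast
      show ?thesis using eqz[OF z] adm_X[OF n th lC, of j' W] lD True jj p q by simp
    next
      case False
      then have jj: "j = j'" using int C D by auto
      have z: "Y j \<in> cr_set n" using lC cr_less_mem by blast
      show ?thesis using eqz[OF z] adm_Y[OF n th lC, of i' W] lD False jj p q by simp
    qed
    then have "a = b \<longleftrightarrow> a' \<noteq> b'" using G_pm2[OF n W(1) p(2) q(2) W(2)] by blast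
    then show "(cr_odd n C' \<and> cr_even n D') \<or> (cr_even n C' \<and> cr_odd n D')"
      using parity[OF n p(2)] parity[OF n q(2)] p(3) q(3) by auto
  qed
next
  note n = assms(1) and th = assms(2)
  assume P: "\<forall>C D C' D'. max_chain (cr_set n) (cr_less n) C \<and> max_chain (cr_set n) (cr_less n) D \<and>
        set C \<noteq> set D \<and> set C \<inter> set D \<noteq> {} \<and>
        chain_image (cr_set n) (cr_less n) \<theta> C C' \<and> chain_image (cr_set n) (cr_less n) \<theta> D D' \<longrightarrow>
        (cr_odd n C' \<and> cr_even n D') \<or> (cr_even n C' \<and> cr_odd n D')"
  have key: "G us (\<theta> (X i, Y j)) + G us (\<theta> (X i', Y j')) = 0"
    if w: "closed_walk (cr_set n) (cr_less n) us" and lC: "cr_less n (X i) (Y j)" and lD: "cr_less n (X i') (Y j')"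
      and neq: "(i, j) \<noteq> (i', j')" and sh: "i = i' \<or> j = j'" for us i j i' j'
  proof -
    have mC: "max_chain (cr_set n) (cr_less n) [X i, Y j]" using lC max_chain_iff by blast
    have mD: "max_chain (cr_set n) (cr_less n) [X i', Y j']" using lD max_chain_iff by blast
    obtain C' where cC: "chain_image (cr_set n) (cr_less n) \<theta> [X i, Y j] C'" using th mC unfolding M_set_def by blast
    obtain D' where cD: "chain_image (cr_set n) (cr_less n) \<theta> [X i', Y j'] D'" using th mD unfolding M_set_def by blast
    obtain a b where p: "\<theta> (X i, Y j) = (X a, Y b)" "cr_less n (X a) (Y b)" "C' = [X a, Y b]"
      using image_chain[OF th lC cC] by blast
    obtain a' b' where q: "\<theta> (X i', Y j') = (X a', Y b')" "cr_less n (X a') (Y b')" "D' = [X a', Y b']"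
      using image_chain[OF th lD cD] by blast
    have "set [X i, Y j] \<noteq> set [X i', Y j']" using neq by (auto simp: doubleton_eq_iff)
    moreover have "set [X i, Y j] \<inter> set [X i', Y j'] \<noteq> {}" using sh by auto
    ultimately have "(cr_odd n C' \<and> cr_even n D') \<or> (cr_even n C' \<and> cr_odd n D')"
      using P mC mD cC cD by blast
    then have "a = b \<longleftrightarrow> a' \<noteq> b'" using parity[OF n p(2)] parity[OF n q(2)] p(3) q(3) by auto
    then show ?thesis using G_pm[OF n w p(2) q(2)] p(1) q(1) by simp
  qed
  have "admissible (cr_set n) (cr_less n) \<theta>"
    unfolding admissible_def
  proof (intro allI impI ballI)
    fix us z assume w: "closed_walk (cr_set n) (cr_less n) us" and z: "z \<in> cr_set n"
    then obtain k where k: "k \<in> {1..n}" "z = X k \<or> z = Y k" unfolding cr_set_def by auto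
    show "int (s_plus (cr_set n) (cr_less n) \<theta> us z) - int (s_minus (cr_set n) (cr_less n) \<theta> us z) =
      int (t_plus (cr_set n) (cr_less n) \<theta> us z) - int (t_minus (cr_set n) (cr_less n) \<theta> us z)"
    proof (cases "z = X k")
      case True
      have l1: "cr_less n (X k) (Y k)" "cr_less n (X k) (Y (pr n k))" using up_X[OF n k(1)] by auto
      have ne: "k \<noteq> pr n k" using pr_ne[OF n k(1)] by auto
      show ?thesis using adm_X[OF n th l1 ne, of us] key[OF w l1] ne True by simp
    next
      case False
      then have zY: "z = Y k" using k by auto
      have l1: "cr_less n (X k) (Y k)" "cr_less n (X (sc n k)) (Y k)" using lo_Y[OF n k(1)] by auto
      have ne: "k \<noteq> sc n k" using sc_ne[OF n k(1)] by auto
      show ?thesis using adm_Y[OF n th l1 ne, of us] key[OF w l1] ne zY by simp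
    qed
  qed
  then show "\<theta> \<in> AM_set (cr_set n) (cr_less n)" unfolding AM_set_def using th by auto
qed

end
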